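(* Let $R_1$ and $R_2$ be finite commutative local principal ideal rings with unity, and let $R=R_1\times R_2$. Suppose $\operatorname{diam}(\Gamma(R_1))=0$ and $\operatorname{diam}(\Gamma(R_2))=2$. Then $\overline{\Gamma(R)}$ is a divisor graph if and only if $R_1$ is an integral domain.
   Context: For a commutative ring $S$ with unity, $Z(S)$ denotes its set of zero divisors. The zero divisor graph $\Gamma(S)$ is the simple graph with vertex set $Z(S)\setminus\{0\}$, distinct $a,b$ adjacent iff $ab=0$; its complement $\overline{\Gamma(S)}$ has the same vertex set with distinct $a,b$ adjacent iff $ab\neq 0$. The diameter of a graph is the maximum distance (number of edges in a shortest path) between pairs of vertices. In the paper's usage, $\operatorname{diam}(\Gamma(S))=0$ means $\Gamma(S)$ has at most one vertex, i.e. $S$ has at most one nonzero zero divisor (this includes the case that $S$ is an integral domain). A ring is local if it has a unique maximal ideal. For a nonempty set $T$ of positive integers, the divisor graph $G(T)$ has vertex set $T$, with distinct $i,j$ adjacent iff $i\mid j$ or $j\mid i$; a graph is a divisor graph if it is isomorphic to some $G(T)$. *)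

theory Defs
  imports "HOL-Algebra.Algebra" "HOL-Library.Extended_Nat"
begin

definition zero_divisors :: "('a, 'm) ring_scheme \<Rightarrow> 'a set" where
  "zero_divisors S = {a \<in> carrier S. \<exists>b \<in> carrier S. b \<noteq> \<zero>\<^bsub>S\<^esub> \<and> a \<otimes>\<^bsub>S\<^esub> b = \<zero>\<^bsub>S\<^esub>}"

definition local_ring :: "('a, 'm) ring_scheme \<Rightarrow> bool" where
  "local_ring S \<longleftrightarrow> (\<exists>!I. maximalideal I S)"

definition principal_ideal_ring :: "('a, 'm) ring_scheme \<Rightarrow> bool" where
  "principal_ideal_ring S \<longleftrightarrow> (\<forall>I. ideal I S \<longrightarrow> principalideal I S)"

definition has_walk :: "'v set \<Rightarrow> ('v \<Rightarrow> 'v \<Rightarrow> bool) \<Rightarrow> 'v \<Rightarrow> 'v \<Rightarrow> nat \<Rightarrow> bool" where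
  "has_walk V E x y n \<longleftrightarrow> (\<exists>p :: 'v list. length p = Suc n \<and> set p \<subseteq> V \<and>
      hd p = x \<and> last p = y \<and> (\<forall>i < n. E (p ! i) (p ! Suc i)))"

definition gdist :: "'v set \<Rightarrow> ('v \<Rightarrow> 'v \<Rightarrow> bool) \<Rightarrow> 'v \<Rightarrow> 'v \<Rightarrow> enat" where
  "gdist V E x y = (if \<exists>n. has_walk V E x y n then enat (LEAST n. has_walk V E x y n) else \<infinity>)"

text \<open>Diameter: supremum of distances between pairs of vertices (0 for at most one vertex).\<close>
definition gdiam :: "'v set \<Rightarrow> ('v \<Rightarrow> 'v \<Rightarrow> bool) \<Rightarrow> enat" where
  "gdiam V E = (SUP x\<in>V. SUP y\<in>V. gdist V E x y)"

definition zdg_vertices :: "('a, 'm) ring_scheme \<Rightarrow> 'a set" where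
  "zdg_vertices S = zero_divisors S - {\<zero>\<^bsub>S\<^esub>}"

definition zdg_adj :: "('a, 'm) ring_scheme \<Rightarrow> 'a \<Rightarrow> 'a \<Rightarrow> bool" where
  "zdg_adj S a b \<longleftrightarrow> a \<noteq> b \<and> a \<otimes>\<^bsub>S\<^esub> b = \<zero>\<^bsub>S\<^esub>"

definition zdg_compl_adj :: "('a, 'm) ring_scheme \<Rightarrow> 'a \<Rightarrow> 'a \<Rightarrow> bool" where
  "zdg_compl_adj S a b \<longleftrightarrow> a \<noteq> b \<and> a \<otimes>\<^bsub>S\<^esub> b \<noteq> \<zero>\<^bsub>S\<^esub>"

definition divisor_graph :: "'v set \<Rightarrow> ('v \<Rightarrow> 'v \<Rightarrow> bool) \<Rightarrow> bool" where
  "divisor_graph V E \<longleftrightarrow> (\<exists>(T :: nat set) f. T \<noteq> {} \<and> (\<forall>t\<in>T. 0 < t) \<and> bij_betw f V T \<and>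
     (\<forall>x\<in>V. \<forall>y\<in>V. E x y \<longleftrightarrow> (f x \<noteq> f y \<and> (f x dvd f y \<or> f y dvd f x))))"

end

theory Submission imports Defs "HOL-Computational_Algebra.Primes"
begin

lemma RDP_carrier: "carrier (RDirProd R S) = carrier R \<times> carrier S"
  by (rule RDirProd_carrier)
lemma RDP_mult: "(a, b) \<otimes>\<^bsub>RDirProd R S\<^esub> (c, d) = (a \<otimes>\<^bsub>R\<^esub> c, b \<otimes>\<^bsub>S\<^esub> d)"
  by (simp add: RDirProd_def DirProd_def monoid.defs)
lemma RDP_zero: "\<zero>\<^bsub>RDirProd R S\<^esub> = (\<zero>\<^bsub>R\<^esub>, \<zero>\<^bsub>S\<^esub>)"
  by (simp add: RDirProd_def DirProd_def monoid.defs)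

lemma gdiam0_single:
  assumes "gdiam V E = 0" "u \<in> V" "v \<in> V" shows "u = v"
proof (rule ccontr)
  assume ne: "u \<noteq> v"
  have "gdist V E u v \<le> gdiam V E"
    unfolding gdiam_def using assms(2,3) by (meson SUP_upper order_trans)
  moreover have "gdist V E u v \<noteq> 0"
  proof (cases "\<exists>n. has_walk V E u v n")
    case True
    let ?n = "LEAST n. has_walk V E u v n"
    have w: "has_walk V E u v ?n" using True by (rule LeastI_ex)
    have "?n \<noteq> 0"
    proof
      assume "?n = 0"
      with w obtain p where "length p = 1" "hd p = u" "last p = v"
        unfolding has_walk_def by auto
      then show False using ne
        by (metis One_nat_def hd_conv_nth last_conv_nth length_0_conv diff_Suc_1 zero_neq_one)
    qed
    then show ?thesis using True unfolding gdist_def by (simp add: zero_enat_def)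
  next
    case False
    then show ?thesis unfolding gdist_def by auto
  qed
  ultimately show False using assms(1) by simp
qed

lemma gdiam_complete_le1:
  assumes "\<And>u v. u \<in> V \<Longrightarrow> v \<in> V \<Longrightarrow> u \<noteq> v \<Longrightarrow> E u v"
  shows "gdiam V E \<le> 1"
  unfolding gdiam_def
proof (intro SUP_least)
  fix u v assume uv: "u \<in> V" "v \<in> V"
  show "gdist V E u v \<le> 1"
  proof (cases "u = v")
    case True
    have "has_walk V E u v 0" unfolding has_walk_def using True uv
      by (intro exI[of _ "[u]"]) auto
    then have "(LEAST n. has_walk V E u v n) = 0" by (simp add: Least_eq_0)
    then show ?thesis unfolding gdist_def using \<open>has_walk V E u v 0\<close> by (auto simp: zero_enat_def[symmetric])
  next
    case False
    have w: "has_walk V E u v 1" unfolding has_walk_def using False uv assms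
      by (intro exI[of _ "[u, v]"]) auto
    then have "(LEAST n. has_walk V E u v n) \<le> 1" by (rule Least_le)
    then show ?thesis unfolding gdist_def using w by (auto simp: one_enat_def)
  qed
qed

lemma prime_injection:
  fixes V :: "'v set" assumes "finite V"
  obtains g :: "'v \<Rightarrow> nat" where "inj_on g V" "\<And>x. x \<in> V \<Longrightarrow> Factorial_Ring.prime (g x)"
proof -
  obtain B where B: "B \<subseteq> {p::nat. Factorial_Ring.prime p}" "finite B" "card B = card V"
    using infinite_arbitrarily_large[OF primes_infinite] by blast
  obtain g where "bij_betw g V B" using finite_same_card_bij[OF assms B(2)] B(3) by metis
  then show ?thesis using that B(1) unfolding bij_betw_def by auto
qed

lemma prod_primes_dvd_subset:
  fixes g :: "'v \<Rightarrow> nat"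
  assumes "inj_on g V" "\<And>x. x \<in> V \<Longrightarrow> Factorial_Ring.prime (g x)" "S \<subseteq> V" "T \<subseteq> V" "finite T"
    and "prod g S dvd prod g T" "finite S"
  shows "S \<subseteq> T"
proof
  fix s assume s: "s \<in> S"
  have "g s dvd prod g S" using s assms(7) by (simp add: dvd_prodI)
  then have "g s dvd prod g T" using assms(6) dvd_trans by blast
  then obtain t where t: "t \<in> T" "g s dvd g t"
    using prime_dvd_prod_iff[OF assms(5) assms(2)] s assms(3) by blast
  have "g s = g t" using primes_dvd_imp_eq[OF assms(2) assms(2) t(2)] s t(1) assms(3,4) by blast
  then have "s = t" using assms(1) s t(1) assms(3,4) unfolding inj_on_def by blast
  then show "s \<in> T" using t by simp
qed

lemma divisor_graph_from_order:
  fixes V :: "'v set" and E :: "'v \<Rightarrow> 'v \<Rightarrow> bool" and lt :: "'v \<Rightarrow> 'v \<Rightarrow> bool"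
  assumes fin: "finite V" and ne: "V \<noteq> {}"
    and irr: "\<And>x. x \<in> V \<Longrightarrow> \<not> lt x x"
    and tr: "\<And>x y z. x \<in> V \<Longrightarrow> y \<in> V \<Longrightarrow> z \<in> V \<Longrightarrow> lt x y \<Longrightarrow> lt y z \<Longrightarrow> lt x z"
    and Elt: "\<And>x y. x \<in> V \<Longrightarrow> y \<in> V \<Longrightarrow> E x y \<longleftrightarrow> x \<noteq> y \<and> (lt x y \<or> lt y x)"
  shows "divisor_graph V E"
proof -
  obtain g :: "'v \<Rightarrow> nat" where g: "inj_on g V" "\<And>x. x \<in> V \<Longrightarrow> Factorial_Ring.prime (g x)"
    using prime_injection[OF fin] by blast
  define D where "D x = {y \<in> V. y = x \<or> lt y x}" for x
  define f where "f x = prod g (D x)" for x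
  have Dsub: "D x \<subseteq> V" for x unfolding D_def by auto
  have Dfin: "finite (D x)" for x using Dsub fin finite_subset by blast
  have key: "f x dvd f y \<longleftrightarrow> x = y \<or> lt x y" if "x \<in> V" "y \<in> V" for x y
  proof
    assume "f x dvd f y"
    then have "D x \<subseteq> D y" unfolding f_def
      using prod_primes_dvd_subset[OF g Dsub Dsub Dfin _ Dfin] by blast
    moreover have "x \<in> D x" using that unfolding D_def by auto
    ultimately show "x = y \<or> lt x y" unfolding D_def by auto
  next
    assume "x = y \<or> lt x y"
    then have "D x \<subseteq> D y" unfolding D_def using tr that by blast
    then show "f x dvd f y" unfolding f_def by (rule prod_dvd_prod_subset[OF Dfin])
  qed
  have finj: "inj_on f V"
  proof (rule inj_onI)
    fix x y assume xy: "x \<in> V" "y \<in> V" "f x = f y"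
    then have "(x = y \<or> lt x y) \<and> (y = x \<or> lt y x)" using key[of x y] key[of y x] by auto
    then show "x = y" using tr irr xy by blast
  qed
  have fpos: "0 < f x" if "x \<in> V" for x
    unfolding f_def using g(2) Dsub
    by (metis (no_types, lifting) gr0I prime_gt_0_nat prod_zero_iff Dfin subsetD less_not_refl2)
  show ?thesis unfolding divisor_graph_def
  proof (intro exI[of _ "f ` V"] exI[of _ f] conjI ballI)
    show "f ` V \<noteq> {}" using ne by simp
    show "bij_betw f V (f ` V)" using finj by (simp add: bij_betw_def)
  next
    fix t assume "t \<in> f ` V" then show "0 < t" using fpos by auto
  next
    fix x y assume xy: "x \<in> V" "y \<in> V"
    have "f x \<noteq> f y \<longleftrightarrow> x \<noteq> y" using finj xy unfolding inj_on_def by blast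
    then show "E x y \<longleftrightarrow> (f x \<noteq> f y \<and> (f x dvd f y \<or> f y dvd f x))"
      using Elt[OF xy] key[OF xy] key[OF xy(2,1)] by blast
  qed
qed

lemma finite_maximal_ideal_above:
  fixes R (structure)
  assumes cr: "cring R" and fin: "finite (carrier R)" and I: "ideal I R" and ne: "I \<noteq> carrier R"
  obtains J where "maximalideal J R" "I \<subseteq> J"
proof -
  interpret cring R by fact
  let ?S = "{J. ideal J R \<and> I \<subseteq> J \<and> J \<noteq> carrier R}"
  have sub: "\<And>J. ideal J R \<Longrightarrow> J \<subseteq> carrier R"
    by (metis ideal.axioms(1) additive_subgroup.a_subset)
  have "?S \<subseteq> Pow (carrier R)" using sub by auto
  then have finS: "finite ?S" by (rule finite_subset) (simp add: fin)
  have IS: "I \<in> ?S" using I ne by auto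
  then have "?S \<noteq> {}" by blast
  from finite_has_maximal[OF finS this] obtain m where m1: "m \<in> ?S"
    and m2: "\<forall>b\<in>?S. m \<subseteq> b \<longrightarrow> m = b" by blast
  have m: "m \<in> ?S" "\<And>b. b \<in> ?S \<Longrightarrow> m \<subseteq> b \<Longrightarrow> m = b" using m1 m2 by auto
  have "maximalideal m R"
  proof (rule maximalidealI)
    show "ideal m R" using m by auto
    show "carrier R \<noteq> m" using m by auto
    fix J assume "ideal J R" "m \<subseteq> J" "J \<subseteq> carrier R"
    show "J = m \<or> J = carrier R"
    proof (cases "J = carrier R")
      case False
      then have "J \<in> ?S" using \<open>ideal J R\<close> \<open>m \<subseteq> J\<close> m(1) by auto
      then show ?thesis using m(2) \<open>m \<subseteq> J\<close> by auto
    qed simp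
  qed
  then show ?thesis using that m by auto
qed

lemma unit_not_in_maximal:
  fixes R (structure)
  assumes cr: "cring R" and M: "maximalideal M R" and u: "u \<in> Units R" shows "u \<notin> M"
proof
  interpret cring R by fact
  interpret maximalideal M R by fact
  assume "u \<in> M"
  then have "inv u \<otimes> u \<in> M" using u by (intro I_l_closed) (auto intro: Units_inv_closed)
  then have "\<one> \<in> M" using Units_l_inv[OF u] by simp
  then show False using one_imp_carrier I_notcarr by auto
qed

lemma local_nonunit_in_maximal:
  fixes R (structure)
  assumes cr: "cring R" and fin: "finite (carrier R)" and loc: "local_ring R"
    and M: "maximalideal M R" and r: "r \<in> carrier R" "r \<notin> Units R"
  shows "r \<in> M"
proof -
  interpret cring R by fact
  have I: "ideal (PIdl r) R" using r(1) by (rule cgenideal_ideal)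
  have "\<one> \<notin> PIdl r"
  proof
    assume "\<one> \<in> PIdl r"
    then obtain x where x: "x \<in> carrier R" "\<one> = x \<otimes> r" unfolding cgenideal_def by auto
    then have "r \<in> Units R" using r(1) unfolding Units_def by (auto simp: m_comm intro!: bexI[of _ x])
    then show False using r by simp
  qed
  then have "PIdl r \<noteq> carrier R" by auto
  then obtain J where J: "maximalideal J R" "PIdl r \<subseteq> J"
    using finite_maximal_ideal_above[OF cr fin I] by blast
  have "J = M" using loc J(1) M unfolding local_ring_def by blast
  then show ?thesis using J(2) cgenideal_self[OF r(1)] by auto
qed

lemma PIdl_sub:
  fixes R (structure)
  assumes "cring R" "x \<in> carrier R" shows "PIdl x \<subseteq> carrier R"
proof -
  interpret cring R by fact
  show ?thesis using assms(2) unfolding cgenideal_def by auto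
qed

lemma local_pir_chain:
  fixes R (structure)
  assumes cr: "cring R" and fin: "finite (carrier R)" and loc: "local_ring R"
    and pir: "principal_ideal_ring R"
  shows "u \<in> carrier R \<Longrightarrow> v \<in> carrier R \<Longrightarrow>
     (\<exists>c\<in>carrier R. u = v \<otimes> c) \<or> (\<exists>c\<in>carrier R. v = u \<otimes> c)"
proof -
  interpret cring R by fact
  obtain M where M: "maximalideal M R" using loc unfolding local_ring_def by blast
  have Mi: "ideal M R" using M by (rule maximalideal.axioms(1))
  then have "principalideal M R" using pir unfolding principal_ideal_ring_def by blast
  then obtain p where p: "p \<in> carrier R" "M = Idl {p}"
    using principalideal.generate by blast
  have Mp: "M = PIdl p" using p cgenideal_eq_genideal by simp
  have inM: "\<exists>x\<in>carrier R. r = x \<otimes> p" if "r \<in> carrier R" "r \<notin> Units R" for r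
  proof -
    have "r \<in> M" using local_nonunit_in_maximal[OF cr fin loc M that] .
    then show ?thesis unfolding Mp cgenideal_def by auto
  qed
  have pM: "p \<in> M" unfolding Mp using p(1) by (rule cgenideal_self)
  have fix0: "r = \<zero>" if r: "r \<in> carrier R" "c \<in> carrier R" "r = c \<otimes> p \<otimes> r" for r c
  proof -
    have rc: "r \<in> carrier R" "c \<in> carrier R" using r(1,2) .
    have req: "c \<otimes> p \<otimes> r = r" using r(3) by simp
    let ?w = "\<one> \<ominus> c \<otimes> p"
    have cpM: "c \<otimes> p \<in> M" using pM rc(2) by (simp add: ideal.I_l_closed[OF Mi])
    have wc: "?w \<in> carrier R" using rc p by simp
    have wU: "?w \<in> Units R"
    proof (rule ccontr)
      assume "?w \<notin> Units R"
      then have "?w \<in> M" using local_nonunit_in_maximal[OF cr fin loc M wc] by simp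
      then have "?w \<oplus> c \<otimes> p \<in> M" using cpM by (simp add: additive_subgroup.a_closed[OF ideal.axioms(1)[OF Mi]])
      moreover have "?w \<oplus> c \<otimes> p = \<one>" using rc p by (simp add: a_minus_def a_assoc l_neg)
      ultimately have "\<one> \<in> M" by simp
      then show False using unit_not_in_maximal[OF cr M] by simp
    qed
    have "?w \<otimes> r = r \<ominus> c \<otimes> p \<otimes> r" using rc p by (simp add: a_minus_def l_distr l_minus)
    also have "\<dots> = \<zero>" using rc by (simp add: req a_minus_def r_neg)
    finally have wr: "?w \<otimes> r = \<zero>" .
    have "r = inv ?w \<otimes> (?w \<otimes> r)" using wU rc(1)
      by (simp add: m_assoc[symmetric] Units_l_inv Units_closed Units_inv_closed)
    then show ?thesis using wr wU by (simp add: Units_inv_closed)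
  qed
  have strict: "card (PIdl r) < card (PIdl x)"
    if r: "r \<in> carrier R" "r \<noteq> \<zero>" "x \<in> carrier R" "r = x \<otimes> p" for r x
  proof -
    have sub: "PIdl r \<subseteq> PIdl x"
    proof
      fix y assume "y \<in> PIdl r"
      then obtain z where z: "z \<in> carrier R" "y = z \<otimes> r" unfolding cgenideal_def by auto
      then have "y = (z \<otimes> p) \<otimes> x" using r p by (simp add: m_ac)
      then show "y \<in> PIdl x" unfolding cgenideal_def using z p by blast
    qed
    have "x \<notin> PIdl r"
    proof
      assume "x \<in> PIdl r"
      then obtain z where z: "z \<in> carrier R" "x = z \<otimes> r" unfolding cgenideal_def by auto
      have "x = z \<otimes> (x \<otimes> p)" by (simp only: r(4)[symmetric] z(2)[symmetric])
      also have "\<dots> = z \<otimes> p \<otimes> x" using z(1) r(3) p(1) by (simp add: m_ac)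
      finally have "x = z \<otimes> p \<otimes> x" .
      then have "x = \<zero>" using fix0 z r p by blast
      then show False using r p by simp
    qed
    moreover have "x \<in> PIdl x" using r(3) by (rule cgenideal_self)
    ultimately have "PIdl r \<subset> PIdl x" using sub by blast
    moreover have "finite (PIdl x)" using PIdl_sub[OF cr r(3)] fin finite_subset by blast
    ultimately show ?thesis by (rule psubset_card_mono[rotated])
  qed
  have cardle: "card (PIdl x) \<le> card (carrier R)" if "x \<in> carrier R" for x
    using PIdl_sub[OF cr that] fin by (rule card_mono[rotated])
  let ?N = "card (carrier R)"
  have main: "\<And>u v. u \<in> carrier R \<Longrightarrow> v \<in> carrier R \<Longrightarrow> 2 * ?N - card (PIdl u) - card (PIdl v) = n \<Longrightarrow>
     (\<exists>c\<in>carrier R. u = v \<otimes> c) \<or> (\<exists>c\<in>carrier R. v = u \<otimes> c)" for n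
  proof (induction n rule: less_induct)
    case (less n u v)
    show ?case
    proof (cases "u = \<zero> \<or> v = \<zero> \<or> u \<in> Units R \<or> v \<in> Units R")
      case True
      then show ?thesis
      proof (elim disjE)
        assume "u = \<zero>" then show ?thesis using less.prems by (auto intro!: bexI[of _ "\<zero>"])
      next
        assume "v = \<zero>" then show ?thesis using less.prems by (auto intro!: bexI[of _ "\<zero>"])
      next
        assume uU: "u \<in> Units R"
        have "v = u \<otimes> (inv u \<otimes> v)" using uU less.prems
          by (simp add: m_assoc[symmetric] Units_r_inv Units_closed Units_inv_closed)
        then show ?thesis using uU less.prems by (auto intro: Units_inv_closed)
      next
        assume vU: "v \<in> Units R"
        have "u = v \<otimes> (inv v \<otimes> u)" using vU less.prems
          by (simp add: m_assoc[symmetric] Units_r_inv Units_closed Units_inv_closed)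
        then show ?thesis using vU less.prems by (auto intro: Units_inv_closed)
      qed
    next
      case False
      then obtain x y where xy: "x \<in> carrier R" "u = x \<otimes> p" "y \<in> carrier R" "v = y \<otimes> p"
        using inM less.prems by meson
      have cu: "card (PIdl u) < card (PIdl x)" using strict less.prems xy False by blast
      have cv: "card (PIdl v) < card (PIdl y)" using strict less.prems xy False by blast
      have "2 * ?N - card (PIdl x) - card (PIdl y) < n"
        using cu cv cardle[OF xy(1)] cardle[OF xy(3)] less.prems(3) by linarith
      then have "(\<exists>c\<in>carrier R. x = y \<otimes> c) \<or> (\<exists>c\<in>carrier R. y = x \<otimes> c)"
        using less.IH xy by blast
      then show ?thesis
      proof (elim disjE bexE)
        fix c assume c: "c \<in> carrier R" "x = y \<otimes> c"
        then have "u = v \<otimes> c" using xy p by (simp add: m_ac)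
        then show ?thesis using c by blast
      next
        fix c assume c: "c \<in> carrier R" "y = x \<otimes> c"
        then have "v = u \<otimes> c" using xy p by (simp add: m_ac)
        then show ?thesis using c by blast
      qed
    qed
  qed
  show "u \<in> carrier R \<Longrightarrow> v \<in> carrier R \<Longrightarrow>
     (\<exists>c\<in>carrier R. u = v \<otimes> c) \<or> (\<exists>c\<in>carrier R. v = u \<otimes> c)"
    by (rule main[OF _ _ refl])
qed

lemma chain_card:
  fixes R (structure)
  assumes cr: "cring R" and fin: "finite (carrier R)"
    and chain: "\<And>u v. u \<in> carrier R \<Longrightarrow> v \<in> carrier R \<Longrightarrow>
     (\<exists>c\<in>carrier R. u = v \<otimes> c) \<or> (\<exists>c\<in>carrier R. v = u \<otimes> c)"
    and q: "q \<in> carrier R" "q' \<in> carrier R" and le: "card (PIdl q) \<le> card (PIdl q')"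
  shows "\<exists>c\<in>carrier R. q = q' \<otimes> c"
proof (rule ccontr)
  interpret cring R by fact
  assume nq: "\<not> ?thesis"
  then obtain c where c: "c \<in> carrier R" "q' = q \<otimes> c" using chain[OF q] by blast
  have sub: "PIdl q' \<subseteq> PIdl q"
  proof
    fix y assume "y \<in> PIdl q'"
    then obtain z where z: "z \<in> carrier R" "y = z \<otimes> q'" unfolding cgenideal_def by auto
    then have "y = (z \<otimes> c) \<otimes> q" using c q by (simp add: m_ac)
    then show "y \<in> PIdl q" unfolding cgenideal_def using z c by blast
  qed
  have "q \<notin> PIdl q'"
  proof
    assume "q \<in> PIdl q'"
    then obtain z where z: "z \<in> carrier R" "q = z \<otimes> q'" unfolding cgenideal_def by auto
    then have "q = q' \<otimes> z" using q by (simp add: m_comm)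
    then show False using nq z by blast
  qed
  moreover have "q \<in> PIdl q" using q(1) by (rule cgenideal_self)
  ultimately have "PIdl q' \<subset> PIdl q" using sub by blast
  moreover have "finite (PIdl q)" using PIdl_sub[OF cr q(1)] fin finite_subset by blast
  ultimately have "card (PIdl q') < card (PIdl q)" by (rule psubset_card_mono[rotated])
  then show False using le by simp
qed

lemma card_PIdl_pos:
  fixes R (structure)
  assumes cr: "cring R" and fin: "finite (carrier R)" and q: "q \<in> carrier R"
  shows "1 \<le> card (PIdl q)" "card (PIdl q) \<le> card (carrier R)"
proof -
  interpret cring R by fact
  have "finite (PIdl q)" using PIdl_sub[OF cr q] fin finite_subset by blast
  moreover have "q \<in> PIdl q" using q by (rule cgenideal_self)
  ultimately show "1 \<le> card (PIdl q)" by (metis One_nat_def Suc_leI card_gt_0_iff empty_iff)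
  show "card (PIdl q) \<le> card (carrier R)" using PIdl_sub[OF cr q] fin by (rule card_mono[rotated])
qed

lemma compl_adj_prod:
  "zdg_compl_adj (RDirProd R S) (a, b) (c, d) \<longleftrightarrow>
     (a, b) \<noteq> (c, d) \<and> (a \<otimes>\<^bsub>R\<^esub> c \<noteq> \<zero>\<^bsub>R\<^esub> \<or> b \<otimes>\<^bsub>S\<^esub> d \<noteq> \<zero>\<^bsub>S\<^esub>)"
  unfolding zdg_compl_adj_def RDP_mult RDP_zero by auto

lemma vertices_prod_sub: "zdg_vertices (RDirProd R S) \<subseteq> carrier R \<times> carrier S"
  unfolding zdg_vertices_def zero_divisors_def RDP_carrier by auto

lemma seven_contra:
  fixes A B C D E F G :: nat
  assumes AB: "A dvd B \<or> B dvd A" and AC: "A dvd C \<or> C dvd A" and AE: "A dvd E \<or> E dvd A"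
    and AG: "A dvd G \<or> G dvd A" and BE: "B dvd E \<or> E dvd B" and DF: "D dvd F \<or> F dvd D"
    and DG: "D dvd G \<or> G dvd D" and EF: "E dvd F \<or> F dvd E" and EG: "E dvd G \<or> G dvd E"
    and FG: "F dvd G \<or> G dvd F"
    and nAD: "\<not> A dvd D" "\<not> D dvd A" and nAF: "\<not> A dvd F" "\<not> F dvd A"
    and nBC: "\<not> B dvd C" "\<not> C dvd B" and nBD: "\<not> B dvd D" "\<not> D dvd B"
    and nBF: "\<not> B dvd F" "\<not> F dvd B" and nBG: "\<not> B dvd G" "\<not> G dvd B"
    and nCE: "\<not> C dvd E" "\<not> E dvd C" and nCG: "\<not> C dvd G" "\<not> G dvd C"
    and nDE: "\<not> D dvd E" "\<not> E dvd D"
  shows False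
proof (cases "A dvd C")
  case True
  have "A dvd B" using AB True nBC dvd_trans by blast
  have "A dvd E" using AE True nCE dvd_trans by blast
  have "A dvd G" using AG True nCG dvd_trans by blast
  have "F dvd E" using EF \<open>A dvd E\<close> nAF dvd_trans by blast
  have "F dvd D" using DF \<open>F dvd E\<close> nDE dvd_trans by blast
  have "D dvd G" using DG \<open>A dvd G\<close> nAD dvd_trans by blast
  have "B dvd E" using BE \<open>F dvd E\<close> nBF dvd_trans by blast
  have "G dvd E" using EG \<open>B dvd E\<close> nBG dvd_trans by blast
  show False using \<open>D dvd G\<close> \<open>G dvd E\<close> nDE dvd_trans by blast
next
  case False
  then have "C dvd A" using AC by blast
  have "B dvd A" using AB \<open>C dvd A\<close> nBC dvd_trans by blast
  have "E dvd A" using AE \<open>C dvd A\<close> nCE dvd_trans by blast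
  have "G dvd A" using AG \<open>C dvd A\<close> nCG dvd_trans by blast
  have "E dvd F" using EF \<open>E dvd A\<close> nAF dvd_trans by blast
  have "D dvd F" using DF \<open>E dvd F\<close> nDE dvd_trans by blast
  have "G dvd D" using DG \<open>G dvd A\<close> nAD dvd_trans by blast
  have "E dvd B" using BE \<open>E dvd F\<close> nBF dvd_trans by blast
  have "E dvd G" using EG \<open>E dvd B\<close> nBG dvd_trans by blast
  show False using \<open>E dvd G\<close> \<open>G dvd D\<close> nDE dvd_trans by blast
qed

lemma domain_direction:
  fixes R1 :: "('a, 'm) ring_scheme" and R2 :: "('b, 'n) ring_scheme"
  assumes d1: "domain R1" and c2: "cring R2"
    and f1: "finite (carrier R1)" and f2: "finite (carrier R2)"
    and nt2: "\<one>\<^bsub>R2\<^esub> \<noteq> \<zero>\<^bsub>R2\<^esub>"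
    and chain: "\<And>u v. u \<in> carrier R2 \<Longrightarrow> v \<in> carrier R2 \<Longrightarrow>
     (\<exists>c\<in>carrier R2. u = v \<otimes>\<^bsub>R2\<^esub> c) \<or> (\<exists>c\<in>carrier R2. v = u \<otimes>\<^bsub>R2\<^esub> c)"
  shows "divisor_graph (zdg_vertices (RDirProd R1 R2)) (zdg_compl_adj (RDirProd R1 R2))"
proof -
  interpret A: domain R1 by fact
  interpret B: cring R2 by fact
  let ?P = "RDirProd R1 R2"
  let ?V = "zdg_vertices ?P"
  let ?E = "zdg_compl_adj ?P"
  let ?N = "card (carrier R2)"
  have Vsub: "?V \<subseteq> carrier R1 \<times> carrier R2" by (rule vertices_prod_sub)
  have finV: "finite ?V" using Vsub f1 f2 finite_subset by blast
  have "(\<zero>\<^bsub>R1\<^esub>, \<one>\<^bsub>R2\<^esub>) \<in> zero_divisors ?P"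
    unfolding zero_divisors_def
  proof (intro CollectI conjI bexI[of _ "(\<one>\<^bsub>R1\<^esub>, \<zero>\<^bsub>R2\<^esub>)"])
    show "(\<zero>\<^bsub>R1\<^esub>, \<one>\<^bsub>R2\<^esub>) \<in> carrier ?P" "(\<one>\<^bsub>R1\<^esub>, \<zero>\<^bsub>R2\<^esub>) \<in> carrier ?P"
      unfolding RDP_carrier by auto
    show "(\<one>\<^bsub>R1\<^esub>, \<zero>\<^bsub>R2\<^esub>) \<noteq> \<zero>\<^bsub>?P\<^esub>" using A.one_not_zero unfolding RDP_zero by auto
    show "(\<zero>\<^bsub>R1\<^esub>, \<one>\<^bsub>R2\<^esub>) \<otimes>\<^bsub>?P\<^esub> (\<one>\<^bsub>R1\<^esub>, \<zero>\<^bsub>R2\<^esub>) = \<zero>\<^bsub>?P\<^esub>"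
      unfolding RDP_mult RDP_zero by simp
  qed
  then have "(\<zero>\<^bsub>R1\<^esub>, \<one>\<^bsub>R2\<^esub>) \<in> ?V" unfolding zdg_vertices_def RDP_zero using nt2 by auto
  then have neV: "?V \<noteq> {}" by blast
  obtain h :: "'a \<times> 'b \<Rightarrow> nat" where h: "inj_on h ?V"
    using finite_imp_inj_to_nat_seg[OF finV] by blast
  define r where "r z = (if fst z = \<zero>\<^bsub>R1\<^esub> then ?N - card (PIdl\<^bsub>R2\<^esub> (snd z))
                          else ?N + card (PIdl\<^bsub>R2\<^esub> (snd z)))" for z
  define lt where "lt x y = (?E x y \<and> (r x < r y \<or> (r x = r y \<and> h x < h y)))" for x y
  have Eiff: "?E (a, b) (c, d) \<longleftrightarrow> (a, b) \<noteq> (c, d) \<and> ((a \<noteq> \<zero>\<^bsub>R1\<^esub> \<and> c \<noteq> \<zero>\<^bsub>R1\<^esub>) \<or> b \<otimes>\<^bsub>R2\<^esub> d \<noteq> \<zero>\<^bsub>R2\<^esub>)"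
    if "a \<in> carrier R1" "c \<in> carrier R1" for a b c d
    unfolding compl_adj_prod using A.integral_iff[OF that] by auto
  have Esym: "?E x y \<longleftrightarrow> ?E y x" if "x \<in> ?V" "y \<in> ?V" for x y
  proof -
    obtain a b c d where xy: "x = (a, b)" "y = (c, d)" by fastforce
    have "a \<in> carrier R1" "b \<in> carrier R2" "c \<in> carrier R1" "d \<in> carrier R2"
      using that Vsub xy by auto
    then show ?thesis unfolding xy compl_adj_prod by (auto simp: A.m_comm B.m_comm)
  qed
  have cb: "1 \<le> card (PIdl\<^bsub>R2\<^esub> q)" "card (PIdl\<^bsub>R2\<^esub> q) \<le> ?N" if "q \<in> carrier R2" for q
    using card_PIdl_pos[OF c2 f2 that] by auto
  have mono: "q' \<otimes>\<^bsub>R2\<^esub> w \<noteq> \<zero>\<^bsub>R2\<^esub>"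
    if qs: "q \<in> carrier R2" "q' \<in> carrier R2" "w \<in> carrier R2" "card (PIdl\<^bsub>R2\<^esub> q) \<le> card (PIdl\<^bsub>R2\<^esub> q')"
       "q \<otimes>\<^bsub>R2\<^esub> w \<noteq> \<zero>\<^bsub>R2\<^esub>" for q q' w
  proof
    assume z: "q' \<otimes>\<^bsub>R2\<^esub> w = \<zero>\<^bsub>R2\<^esub>"
    obtain c where c: "c \<in> carrier R2" "q = q' \<otimes>\<^bsub>R2\<^esub> c"
      using chain_card[OF c2 f2 chain qs(1,2,4)] by blast
    have "q \<otimes>\<^bsub>R2\<^esub> w = c \<otimes>\<^bsub>R2\<^esub> (q' \<otimes>\<^bsub>R2\<^esub> w)" using c qs by (simp add: B.m_ac)
    then show False using z qs c by simp
  qed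
  have trE: "?E x z" if xyz: "x \<in> ?V" "y \<in> ?V" "z \<in> ?V" "x \<noteq> z" "?E x y" "?E y z"
     "r x \<le> r y" "r y \<le> r z" for x y z
  proof -
    obtain a b where x: "x = (a, b)" by fastforce
    obtain c d where y: "y = (c, d)" by fastforce
    obtain e g where z: "z = (e, g)" by fastforce
    have car: "a \<in> carrier R1" "b \<in> carrier R2" "c \<in> carrier R1" "d \<in> carrier R2"
      "e \<in> carrier R1" "g \<in> carrier R2" using xyz(1-3) Vsub unfolding x y z by auto
    define kb where "kb = card (PIdl\<^bsub>R2\<^esub> b)"
    define kd where "kd = card (PIdl\<^bsub>R2\<^esub> d)"
    define kg where "kg = card (PIdl\<^bsub>R2\<^esub> g)"
    have kb: "1 \<le> kb" "kb \<le> ?N" unfolding kb_def using cb[OF car(2)] by auto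
    have kd: "1 \<le> kd" "kd \<le> ?N" unfolding kd_def using cb[OF car(4)] by auto
    have kg: "1 \<le> kg" "kg \<le> ?N" unfolding kg_def using cb[OF car(6)] by auto
    have rx: "r x = (if a = \<zero>\<^bsub>R1\<^esub> then ?N - kb else ?N + kb)" unfolding r_def x kb_def by simp
    have ry: "r y = (if c = \<zero>\<^bsub>R1\<^esub> then ?N - kd else ?N + kd)" unfolding r_def y kd_def by simp
    have rz: "r z = (if e = \<zero>\<^bsub>R1\<^esub> then ?N - kg else ?N + kg)" unfolding r_def z kg_def by simp
    have E1: "?E (a, b) (c, d)" using xyz(5) unfolding x y .
    have E2: "?E (c, d) (e, g)" using xyz(6) unfolding y z .
    have Exy: "(a \<noteq> \<zero>\<^bsub>R1\<^esub> \<and> c \<noteq> \<zero>\<^bsub>R1\<^esub>) \<or> b \<otimes>\<^bsub>R2\<^esub> d \<noteq> \<zero>\<^bsub>R2\<^esub>"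
      using E1 unfolding Eiff[OF car(1) car(3)] by blast
    have Eyz: "(c \<noteq> \<zero>\<^bsub>R1\<^esub> \<and> e \<noteq> \<zero>\<^bsub>R1\<^esub>) \<or> d \<otimes>\<^bsub>R2\<^esub> g \<noteq> \<zero>\<^bsub>R2\<^esub>"
      using E2 unfolding Eiff[OF car(3) car(5)] by blast
    have le1: "r x \<le> r y" and le2: "r y \<le> r z" using xyz(7,8) .
    have goal: "(a \<noteq> \<zero>\<^bsub>R1\<^esub> \<and> e \<noteq> \<zero>\<^bsub>R1\<^esub>) \<or> b \<otimes>\<^bsub>R2\<^esub> g \<noteq> \<zero>\<^bsub>R2\<^esub>"
    proof (cases "a = \<zero>\<^bsub>R1\<^esub>")
      case a0: True
      show ?thesis
      proof (cases "c = \<zero>\<^bsub>R1\<^esub>")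
        case c0: True
        have "?N - kb \<le> ?N - kd" using le1 unfolding rx ry using a0 c0 by simp
        then have "kd \<le> kb" using kb kd by linarith
        moreover have "d \<otimes>\<^bsub>R2\<^esub> g \<noteq> \<zero>\<^bsub>R2\<^esub>" using Eyz c0 by blast
        ultimately have "b \<otimes>\<^bsub>R2\<^esub> g \<noteq> \<zero>\<^bsub>R2\<^esub>" using mono[OF car(4) car(2) car(6)] unfolding kb_def kd_def by blast
        then show ?thesis by blast
      next
        case c1: False
        have e1: "e \<noteq> \<zero>\<^bsub>R1\<^esub>"
        proof
          assume e0: "e = \<zero>\<^bsub>R1\<^esub>"
          have "?N + kd \<le> ?N - kg" using le2 unfolding ry rz using c1 e0 by simp
          then show False using kd kg by linarith
        qed
        have "?N + kd \<le> ?N + kg" using le2 unfolding ry rz using c1 e1 by simp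
        then have "kd \<le> kg" by linarith
        moreover have "b \<otimes>\<^bsub>R2\<^esub> d \<noteq> \<zero>\<^bsub>R2\<^esub>" using Exy a0 by blast
        then have "d \<otimes>\<^bsub>R2\<^esub> b \<noteq> \<zero>\<^bsub>R2\<^esub>" using car(2,4) B.m_comm by metis
        ultimately have "g \<otimes>\<^bsub>R2\<^esub> b \<noteq> \<zero>\<^bsub>R2\<^esub>" using mono[OF car(4) car(6) car(2)] unfolding kg_def kd_def by blast
        then have "b \<otimes>\<^bsub>R2\<^esub> g \<noteq> \<zero>\<^bsub>R2\<^esub>" using car(2,6) B.m_comm by metis
        then show ?thesis by blast
      qed
    next
      case a1: False
      have c1: "c \<noteq> \<zero>\<^bsub>R1\<^esub>"
      proof
        assume c0: "c = \<zero>\<^bsub>R1\<^esub>"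
        have "?N + kb \<le> ?N - kd" using le1 unfolding rx ry using a1 c0 by simp
        then show False using kb kd by linarith
      qed
      have e1: "e \<noteq> \<zero>\<^bsub>R1\<^esub>"
      proof
        assume e0: "e = \<zero>\<^bsub>R1\<^esub>"
        have "?N + kd \<le> ?N - kg" using le2 unfolding ry rz using c1 e0 by simp
        then show False using kd kg by linarith
      qed
      show ?thesis using a1 e1 by blast
    qed
    have "(a, b) \<noteq> (e, g)" using xyz(4) unfolding x z .
    then have "?E (a, b) (e, g)" unfolding Eiff[OF car(1) car(5)] using goal by blast
    then show ?thesis unfolding x z .
  qed
  show ?thesis
  proof (rule divisor_graph_from_order[OF finV neV, of lt])
    fix x assume "x \<in> ?V" then show "\<not> lt x x" unfolding lt_def zdg_compl_adj_def by auto
  next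
    fix x y z assume xyz: "x \<in> ?V" "y \<in> ?V" "z \<in> ?V" "lt x y" "lt y z"
    have rr: "r x \<le> r y" "r y \<le> r z" using xyz(4,5) unfolding lt_def by auto
    have lex: "r x < r z \<or> (r x = r z \<and> h x < h z)" using xyz(4,5) unfolding lt_def by auto
    then have "x \<noteq> z" by auto
    then have "?E x z" using trE[OF xyz(1-3) _ _ _ rr] xyz(4,5) unfolding lt_def by blast
    then show "lt x z" using lex unfolding lt_def by blast
  next
    fix x y assume xy: "x \<in> ?V" "y \<in> ?V"
    have "x \<noteq> y \<Longrightarrow> h x \<noteq> h y" using h xy unfolding inj_on_def by blast
    moreover have "?E x y \<Longrightarrow> x \<noteq> y" unfolding zdg_compl_adj_def by auto
    ultimately show "?E x y \<longleftrightarrow> x \<noteq> y \<and> (lt x y \<or> lt y x)"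
      using Esym[OF xy] unfolding lt_def by (auto simp: linorder_neq_iff)
  qed
qed

lemma nondomain_direction:
  fixes R1 :: "('a, 'm) ring_scheme" and R2 :: "('b, 'n) ring_scheme"
  assumes c1: "cring R1" and c2: "cring R2"
    and a: "a \<in> carrier R1" "a \<noteq> \<zero>\<^bsub>R1\<^esub>" "a \<otimes>\<^bsub>R1\<^esub> a = \<zero>\<^bsub>R1\<^esub>"
    and xy: "x \<in> carrier R2" "y \<in> carrier R2" "x \<noteq> \<zero>\<^bsub>R2\<^esub>" "y \<noteq> \<zero>\<^bsub>R2\<^esub>"
      "x \<otimes>\<^bsub>R2\<^esub> x \<noteq> \<zero>\<^bsub>R2\<^esub>" "x \<otimes>\<^bsub>R2\<^esub> y = \<zero>\<^bsub>R2\<^esub>" "y \<otimes>\<^bsub>R2\<^esub> y = \<zero>\<^bsub>R2\<^esub>"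
  shows "\<not> divisor_graph (zdg_vertices (RDirProd R1 R2)) (zdg_compl_adj (RDirProd R1 R2))"
proof
  interpret A: cring R1 by fact
  interpret B: cring R2 by fact
  let ?P = "RDirProd R1 R2"
  let ?V = "zdg_vertices ?P"
  let ?E = "zdg_compl_adj ?P"
  assume "divisor_graph ?V ?E"
  then obtain T and f :: "'a \<times> 'b \<Rightarrow> nat" where f: "bij_betw f ?V T"
    and Ef: "\<And>u v. u \<in> ?V \<Longrightarrow> v \<in> ?V \<Longrightarrow> ?E u v \<longleftrightarrow> (f u \<noteq> f v \<and> (f u dvd f v \<or> f v dvd f u))"
    unfolding divisor_graph_def by blast
  have finj: "inj_on f ?V" using f by (simp add: bij_betw_def)
  have edge: "f u dvd f v \<or> f v dvd f u" if "u \<in> ?V" "v \<in> ?V" "?E u v" for u v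
    using Ef[OF that(1,2)] that(3) by blast
  have nonedge: "\<not> f u dvd f v \<and> \<not> f v dvd f u" if "u \<in> ?V" "v \<in> ?V" "u \<noteq> v" "\<not> ?E u v" for u v
  proof -
    have "f u \<noteq> f v" using finj that(1-3) unfolding inj_on_def by blast
    then show ?thesis using Ef[OF that(1,2)] that(4) by blast
  qed
  have inV: "(p, q) \<in> ?V" if "p \<in> carrier R1" "q \<in> carrier R2" "p' \<in> carrier R1" "q' \<in> carrier R2"
     "(p, q) \<noteq> (\<zero>\<^bsub>R1\<^esub>, \<zero>\<^bsub>R2\<^esub>)" "(p', q') \<noteq> (\<zero>\<^bsub>R1\<^esub>, \<zero>\<^bsub>R2\<^esub>)"
     "p \<otimes>\<^bsub>R1\<^esub> p' = \<zero>\<^bsub>R1\<^esub>" "q \<otimes>\<^bsub>R2\<^esub> q' = \<zero>\<^bsub>R2\<^esub>" for p q p' q'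
  proof -
    have "(p, q) \<in> zero_divisors ?P"
      unfolding zero_divisors_def
    proof (intro CollectI conjI bexI[of _ "(p', q')"])
      show "(p, q) \<in> carrier ?P" "(p', q') \<in> carrier ?P" unfolding RDP_carrier using that by auto
      show "(p', q') \<noteq> \<zero>\<^bsub>?P\<^esub>" using that unfolding RDP_zero by auto
      show "(p, q) \<otimes>\<^bsub>?P\<^esub> (p', q') = \<zero>\<^bsub>?P\<^esub>" using that unfolding RDP_mult RDP_zero by simp
    qed
    then show ?thesis unfolding zdg_vertices_def RDP_zero using that by auto
  qed
  have o1: "\<one>\<^bsub>R1\<^esub> \<noteq> \<zero>\<^bsub>R1\<^esub>" using a by (metis A.r_one A.r_null)
  have o2: "\<one>\<^bsub>R2\<^esub> \<noteq> \<zero>\<^bsub>R2\<^esub>" using xy by (metis B.r_one B.r_null)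
  have x1: "x \<noteq> \<one>\<^bsub>R2\<^esub>" using xy by auto
  have y1: "y \<noteq> \<one>\<^bsub>R2\<^esub>" using xy by auto
  have xny: "x \<noteq> y" using xy by auto
  have a1: "a \<noteq> \<one>\<^bsub>R1\<^esub>" using a o1 by auto
  let ?A = "(\<zero>\<^bsub>R1\<^esub>, \<one>\<^bsub>R2\<^esub>)"
  let ?B = "(\<zero>\<^bsub>R1\<^esub>, x)"
  let ?C = "(\<zero>\<^bsub>R1\<^esub>, y)"
  let ?D = "(a, \<zero>\<^bsub>R2\<^esub>)"
  let ?Ee = "(a, x)"
  let ?F = "(\<one>\<^bsub>R1\<^esub>, \<zero>\<^bsub>R2\<^esub>)"
  let ?G = "(\<one>\<^bsub>R1\<^esub>, y)"
  have vA: "?A \<in> ?V" by (rule inV[of _ _ "\<one>\<^bsub>R1\<^esub>" "\<zero>\<^bsub>R2\<^esub>"]) (use o1 o2 in auto)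
  have vB: "?B \<in> ?V" by (rule inV[of _ _ "\<one>\<^bsub>R1\<^esub>" "\<zero>\<^bsub>R2\<^esub>"]) (use o1 xy in auto)
  have vC: "?C \<in> ?V" by (rule inV[of _ _ "\<one>\<^bsub>R1\<^esub>" "\<zero>\<^bsub>R2\<^esub>"]) (use o1 xy in auto)
  have vD: "?D \<in> ?V" by (rule inV[of _ _ a "\<zero>\<^bsub>R2\<^esub>"]) (use a in auto)
  have vE: "?Ee \<in> ?V" by (rule inV[of _ _ a "\<zero>\<^bsub>R2\<^esub>"]) (use a xy in auto)
  have vF: "?F \<in> ?V" by (rule inV[of _ _ "\<zero>\<^bsub>R1\<^esub>" "\<one>\<^bsub>R2\<^esub>"]) (use o1 o2 in auto)
  have vG: "?G \<in> ?V" by (rule inV[of _ _ "\<zero>\<^bsub>R1\<^esub>" y]) (use o1 xy in auto)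
  have yx: "y \<otimes>\<^bsub>R2\<^esub> x = \<zero>\<^bsub>R2\<^esub>" using xy B.m_comm by metis
  note simps = yx compl_adj_prod a xy o1 o2 x1 y1 xny a1 x1[symmetric] y1[symmetric] xny[symmetric] a1[symmetric]
    a(2)[symmetric] xy(3,4)[symmetric] o1[symmetric] o2[symmetric] B.m_comm[of x y]
  show False
  proof (rule seven_contra[of "f ?A" "f ?B" "f ?C" "f ?Ee" "f ?G" "f ?D" "f ?F"])
    show "f ?A dvd f ?B \<or> f ?B dvd f ?A" by (rule edge[OF vA vB]) (simp add: simps)
    show "f ?A dvd f ?C \<or> f ?C dvd f ?A" by (rule edge[OF vA vC]) (simp add: simps)
    show "f ?A dvd f ?Ee \<or> f ?Ee dvd f ?A" by (rule edge[OF vA vE]) (simp add: simps)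
    show "f ?A dvd f ?G \<or> f ?G dvd f ?A" by (rule edge[OF vA vG]) (simp add: simps)
    show "f ?B dvd f ?Ee \<or> f ?Ee dvd f ?B" by (rule edge[OF vB vE]) (simp add: simps)
    show "f ?D dvd f ?F \<or> f ?F dvd f ?D" by (rule edge[OF vD vF]) (simp add: simps)
    show "f ?D dvd f ?G \<or> f ?G dvd f ?D" by (rule edge[OF vD vG]) (simp add: simps)
    show "f ?Ee dvd f ?F \<or> f ?F dvd f ?Ee" by (rule edge[OF vE vF]) (simp add: simps)
    show "f ?Ee dvd f ?G \<or> f ?G dvd f ?Ee" by (rule edge[OF vE vG]) (simp add: simps)
    show "f ?F dvd f ?G \<or> f ?G dvd f ?F" by (rule edge[OF vF vG]) (simp add: simps)
    have "\<not> f ?A dvd f ?D \<and> \<not> f ?D dvd f ?A" by (rule nonedge[OF vA vD]) (simp_all add: simps)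
    then show "\<not> f ?A dvd f ?D" "\<not> f ?D dvd f ?A" by auto
    have "\<not> f ?A dvd f ?F \<and> \<not> f ?F dvd f ?A" by (rule nonedge[OF vA vF]) (simp_all add: simps)
    then show "\<not> f ?A dvd f ?F" "\<not> f ?F dvd f ?A" by auto
    have "\<not> f ?B dvd f ?C \<and> \<not> f ?C dvd f ?B" by (rule nonedge[OF vB vC]) (simp_all add: simps)
    then show "\<not> f ?B dvd f ?C" "\<not> f ?C dvd f ?B" by auto
    have "\<not> f ?B dvd f ?D \<and> \<not> f ?D dvd f ?B" by (rule nonedge[OF vB vD]) (simp_all add: simps)
    then show "\<not> f ?B dvd f ?D" "\<not> f ?D dvd f ?B" by auto
    have "\<not> f ?B dvd f ?F \<and> \<not> f ?F dvd f ?B" by (rule nonedge[OF vB vF]) (simp_all add: simps)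
    then show "\<not> f ?B dvd f ?F" "\<not> f ?F dvd f ?B" by auto
    have "\<not> f ?B dvd f ?G \<and> \<not> f ?G dvd f ?B" by (rule nonedge[OF vB vG]) (simp_all add: simps)
    then show "\<not> f ?B dvd f ?G" "\<not> f ?G dvd f ?B" by auto
    have "\<not> f ?C dvd f ?Ee \<and> \<not> f ?Ee dvd f ?C" by (rule nonedge[OF vC vE]) (simp_all add: simps)
    then show "\<not> f ?C dvd f ?Ee" "\<not> f ?Ee dvd f ?C" by auto
    have "\<not> f ?C dvd f ?G \<and> \<not> f ?G dvd f ?C" by (rule nonedge[OF vC vG]) (simp_all add: simps)
    then show "\<not> f ?C dvd f ?G" "\<not> f ?G dvd f ?C" by auto
    have "\<not> f ?D dvd f ?Ee \<and> \<not> f ?Ee dvd f ?D" by (rule nonedge[OF vD vE]) (simp_all add: simps)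
    then show "\<not> f ?D dvd f ?Ee" "\<not> f ?Ee dvd f ?D" by auto
  qed
qed


lemma local_nontrivial:
  fixes R (structure)
  assumes "cring R" "local_ring R" shows "\<one> \<noteq> \<zero>"
proof
  interpret cring R by fact
  assume eq: "\<one> = \<zero>"
  obtain M where M: "maximalideal M R" using assms(2) unfolding local_ring_def by blast
  have "\<zero> \<in> M" using M by (simp add: additive_subgroup.zero_closed ideal.axioms(1) maximalideal.axioms(1))
  then have "\<one> \<in> M" using eq by simp
  then show False using unit_not_in_maximal[OF assms(1) M] by simp
qed

lemma diam2_elems:
  fixes R (structure)
  assumes cr: "cring R" and fin: "finite (carrier R)" and loc: "local_ring R"
    and pir: "principal_ideal_ring R" and d: "gdiam (zdg_vertices R) (zdg_adj R) = 2"
  obtains x y where "x \<in> carrier R" "y \<in> carrier R" "x \<noteq> \<zero>" "y \<noteq> \<zero>"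
      "x \<otimes> x \<noteq> \<zero>" "x \<otimes> y = \<zero>" "y \<otimes> y = \<zero>"
proof -
  interpret cring R by fact
  note chain = local_pir_chain[OF cr fin loc pir]
  have "\<exists>u\<in>zdg_vertices R. \<exists>v\<in>zdg_vertices R. u \<noteq> v \<and> u \<otimes> v \<noteq> \<zero>"
  proof (rule ccontr)
    assume "\<not> ?thesis"
    then have "gdiam (zdg_vertices R) (zdg_adj R) \<le> 1"
      by (intro gdiam_complete_le1) (auto simp: zdg_adj_def)
    then show False using d by (simp add: one_enat_def numeral_eq_enat)
  qed
  then obtain u v where uv: "u \<in> zdg_vertices R" "v \<in> zdg_vertices R" "u \<otimes> v \<noteq> \<zero>" by blast
  have uc: "u \<in> carrier R" "v \<in> carrier R" using uv unfolding zdg_vertices_def zero_divisors_def by auto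
  have "\<exists>x\<in>zdg_vertices R. x \<otimes> x \<noteq> \<zero>"
  proof (cases "\<exists>c\<in>carrier R. u = v \<otimes> c")
    case True
    then obtain c where c: "c \<in> carrier R" "u = v \<otimes> c" by blast
    have "u \<otimes> v = c \<otimes> (v \<otimes> v)" using c uc by (simp add: m_ac)
    then have "v \<otimes> v \<noteq> \<zero>" using uv(3) c uc by auto
    then show ?thesis using uv(2) by blast
  next
    case False
    then obtain c where c: "c \<in> carrier R" "v = u \<otimes> c" using chain[OF uc] by blast
    have "u \<otimes> v = c \<otimes> (u \<otimes> u)" using c uc by (simp add: m_ac)
    then have "u \<otimes> u \<noteq> \<zero>" using uv(3) c uc by auto
    then show ?thesis using uv(1) by blast
  qed
  then obtain x where x: "x \<in> zdg_vertices R" "x \<otimes> x \<noteq> \<zero>" by blast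
  then obtain y where y: "x \<in> carrier R" "x \<noteq> \<zero>" "y \<in> carrier R" "y \<noteq> \<zero>" "x \<otimes> y = \<zero>"
    unfolding zdg_vertices_def zero_divisors_def by auto
  have yy: "y \<otimes> y = \<zero>"
  proof (cases "\<exists>c\<in>carrier R. y = x \<otimes> c")
    case True
    then obtain c where c: "c \<in> carrier R" "y = x \<otimes> c" by blast
    have "y \<otimes> y = c \<otimes> (x \<otimes> y)" using c(1) y(1,3) by (simp add: c(2) m_ac)
    then show ?thesis using y c by simp
  next
    case False
    then obtain c where c: "c \<in> carrier R" "x = y \<otimes> c" using chain[OF y(1,3)] by blast
    have "x \<otimes> x = c \<otimes> (x \<otimes> y)" using c(1) y(1,3) by (simp add: c(2) m_ac)
    then show ?thesis using y c x(2) by simp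
  qed
  show ?thesis using that y x(2) yy by blast
qed

theorem theorem2p5:
  fixes R1 :: "('a, 'm) ring_scheme" and R2 :: "('b, 'n) ring_scheme"
  assumes "cring R1" and "cring R2"
    and "finite (carrier R1)" and "finite (carrier R2)"
    and "local_ring R1" and "local_ring R2"
    and "principal_ideal_ring R1" and "principal_ideal_ring R2"
    and "gdiam (zdg_vertices R1) (zdg_adj R1) = 0"
    and "gdiam (zdg_vertices R2) (zdg_adj R2) = 2"
  shows "divisor_graph (zdg_vertices (RDirProd R1 R2)) (zdg_compl_adj (RDirProd R1 R2))
           \<longleftrightarrow> domain R1"
  proof -
  interpret A: cring R1 by fact
  interpret B: cring R2 by fact
  have o1: "\<one>\<^bsub>R1\<^esub> \<noteq> \<zero>\<^bsub>R1\<^esub>" using local_nontrivial assms(1,5) by blast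
  have o2: "\<one>\<^bsub>R2\<^esub> \<noteq> \<zero>\<^bsub>R2\<^esub>" using local_nontrivial assms(2,6) by blast
  note chain2 = local_pir_chain[OF assms(2,4,6,8)]
  show ?thesis
  proof
    assume dg: "divisor_graph (zdg_vertices (RDirProd R1 R2)) (zdg_compl_adj (RDirProd R1 R2))"
    show "domain R1"
    proof (rule ccontr)
      assume nd: "\<not> domain R1"
      have "\<exists>a\<in>carrier R1. \<exists>b\<in>carrier R1. a \<noteq> \<zero>\<^bsub>R1\<^esub> \<and> b \<noteq> \<zero>\<^bsub>R1\<^esub> \<and> a \<otimes>\<^bsub>R1\<^esub> b = \<zero>\<^bsub>R1\<^esub>"
      proof (rule ccontr)
        assume "\<not> ?thesis"
        then have "domain R1"
          by (intro domain.intro assms(1) domain_axioms.intro o1) blast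
        then show False using nd by simp
      qed
      then obtain a b where ab: "a \<in> carrier R1" "b \<in> carrier R1" "a \<noteq> \<zero>\<^bsub>R1\<^esub>" "b \<noteq> \<zero>\<^bsub>R1\<^esub>"
        "a \<otimes>\<^bsub>R1\<^esub> b = \<zero>\<^bsub>R1\<^esub>" by blast
      have "a \<in> zdg_vertices R1" unfolding zdg_vertices_def zero_divisors_def using ab by blast
      moreover have "b \<in> zdg_vertices R1" unfolding zdg_vertices_def zero_divisors_def
        using ab A.m_comm[of a b] by auto
      ultimately have "a = b" using gdiam0_single[OF assms(9)] by blast
      then have aa: "a \<otimes>\<^bsub>R1\<^esub> a = \<zero>\<^bsub>R1\<^esub>" using ab by simp
      obtain x y where xy: "x \<in> carrier R2" "y \<in> carrier R2" "x \<noteq> \<zero>\<^bsub>R2\<^esub>" "y \<noteq> \<zero>\<^bsub>R2\<^esub>"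
        "x \<otimes>\<^bsub>R2\<^esub> x \<noteq> \<zero>\<^bsub>R2\<^esub>" "x \<otimes>\<^bsub>R2\<^esub> y = \<zero>\<^bsub>R2\<^esub>" "y \<otimes>\<^bsub>R2\<^esub> y = \<zero>\<^bsub>R2\<^esub>"
        using diam2_elems[OF assms(2,4,6,8,10)] by blast
      show False using nondomain_direction[OF assms(1,2) ab(1,3) aa xy] dg by blast
    qed
  next
    assume "domain R1"
    then show "divisor_graph (zdg_vertices (RDirProd R1 R2)) (zdg_compl_adj (RDirProd R1 R2))"
      using domain_direction[OF _ assms(2,3,4) o2 chain2] by blast
  qed
qed

end
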